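(* If $n\ge 1$ and $k\ge 2$ are integers, then the radius of the $k$-Pell graph $\Pi_{n,k}$ is $$\operatorname{rad}(\Pi_{n,k})=\left\lfloor \frac{kn}{2}\right\rfloor.$$
   Context: For an integer $k\ge 2$, a $k$-Pell string is a finite word over the alphabet $\{0,1,\ldots,k-1,kk\}$, i.e. a word over $\{0,1,\ldots,k\}$ in which every maximal run of the letter $k$ has even length. For $n\ge 0$, the $k$-Pell graph $\Pi_{n,k}$ has as vertices all $k$-Pell strings of length $n$, and two vertices are adjacent if one is obtained from the other either by replacing a single letter $i$ by $i+1$ (or vice versa) for some $i\in\{0,1,\ldots,k-2\}$, or by replacing one factor $(k-1)(k-1)$ by $kk$ (or vice versa), in such a way that the resulting string is again a $k$-Pell string. The radius is the minimum eccentricity of a vertex with respect to the shortest-path distance. *)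

theory Defs
  imports Main
begin

text \<open>k-Pell strings: words over {0,...,k} (as nat lists) which factor into
  the tokens 0,1,...,k-1 and kk, i.e. every maximal run of k has even length.\<close>
inductive pell_string :: "nat \<Rightarrow> nat list \<Rightarrow> bool" for k :: nat where
  Nil: "pell_string k []"
| Small: "i < k \<Longrightarrow> pell_string k xs \<Longrightarrow> pell_string k (i # xs)"
| KK: "pell_string k xs \<Longrightarrow> pell_string k (k # k # xs)"

definition pell_vertices :: "nat \<Rightarrow> nat \<Rightarrow> nat list set" where
  "pell_vertices n k = {xs. length xs = n \<and> pell_string k xs}"

definition pell_move :: "nat \<Rightarrow> nat list \<Rightarrow> nat list \<Rightarrow> bool" where
  "pell_move k u v \<longleftrightarrow>
     (\<exists>a b i. i + 2 \<le> k \<and> u = a @ [i] @ b \<and> v = a @ [i + 1] @ b) \<or>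
     (\<exists>a b. u = a @ [k - 1, k - 1] @ b \<and> v = a @ [k, k] @ b)"

definition pell_adj :: "nat \<Rightarrow> nat \<Rightarrow> nat list \<Rightarrow> nat list \<Rightarrow> bool" where
  "pell_adj n k u v \<longleftrightarrow> u \<in> pell_vertices n k \<and> v \<in> pell_vertices n k \<and>
     (pell_move k u v \<or> pell_move k v u)"

definition pell_dist :: "nat \<Rightarrow> nat \<Rightarrow> nat list \<Rightarrow> nat list \<Rightarrow> nat" where
  "pell_dist n k u v = (LEAST m. (pell_adj n k ^^ m) u v)"

definition pell_ecc :: "nat \<Rightarrow> nat \<Rightarrow> nat list \<Rightarrow> nat" where
  "pell_ecc n k u = Max ((\<lambda>v. pell_dist n k u v) ` pell_vertices n k)"

definition pell_radius :: "nat \<Rightarrow> nat \<Rightarrow> nat" where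
  "pell_radius n k = Min (pell_ecc n k ` pell_vertices n k)"

end

theory Submission
  imports Defs
begin

lemma pell_append: "pell_string k xs \<Longrightarrow> pell_string k ys \<Longrightarrow> pell_string k (xs @ ys)"
  by (induction xs rule: pell_string.induct) (auto intro: pell_string.intros)

lemma pell_rep: "c < k \<Longrightarrow> pell_string k (replicate n c)"
  by (induction n) (auto intro: pell_string.intros)

lemma pell_single: "i < k \<Longrightarrow> pell_string k [i]"
  by (auto intro: pell_string.intros)

lemma pell_kk: "pell_string k [k, k]"
  by (auto intro: pell_string.intros)

lemma pell_le: "pell_string k xs \<Longrightarrow> set xs \<subseteq> {..k}"
  by (induction xs rule: pell_string.induct) auto

lemma pell_cons_inv: "pell_string k (x # r) \<Longrightarrow>
   (x < k \<and> pell_string k r) \<or> (x = k \<and> (\<exists>r'. r = k # r' \<and> pell_string k r'))"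
  by (cases rule: pell_string.cases) auto

lemma move_len: "pell_move k u v \<Longrightarrow> length u = length v"
  unfolding pell_move_def by auto

lemma move_ctx: "pell_move k u v \<Longrightarrow> pell_move k (w @ u @ w') (w @ v @ w')"
  unfolding pell_move_def
proof (elim disjE exE conjE)
  fix a b i assume "i + 2 \<le> k" "u = a @ [i] @ b" "v = a @ [i + 1] @ b"
  then show "(\<exists>a b i. i + 2 \<le> k \<and> w @ u @ w' = a @ [i] @ b \<and> w @ v @ w' = a @ [i + 1] @ b) \<or>
    (\<exists>a b. w @ u @ w' = a @ [k - 1, k - 1] @ b \<and> w @ v @ w' = a @ [k, k] @ b)"
    by (intro disjI1 exI[of _ "w @ a"] exI[of _ "b @ w'"] exI[of _ i]) auto
next
  fix a b assume "u = a @ [k - 1, k - 1] @ b" "v = a @ [k, k] @ b"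
  then show "(\<exists>a b i. i + 2 \<le> k \<and> w @ u @ w' = a @ [i] @ b \<and> w @ v @ w' = a @ [i + 1] @ b) \<or>
    (\<exists>a b. w @ u @ w' = a @ [k - 1, k - 1] @ b \<and> w @ v @ w' = a @ [k, k] @ b)"
    by (intro disjI2 exI[of _ "w @ a"] exI[of _ "b @ w'"]) auto
qed

definition adjp :: "nat \<Rightarrow> nat list \<Rightarrow> nat list \<Rightarrow> bool" where
  "adjp k u v \<longleftrightarrow> pell_string k u \<and> pell_string k v \<and> (pell_move k u v \<or> pell_move k v u)"

lemma adjp_len: "adjp k u v \<Longrightarrow> length u = length v"
  unfolding adjp_def using move_len by metis

lemma adjp_sym: "adjp k u v \<Longrightarrow> adjp k v u"
  unfolding adjp_def by auto

lemma adjp_ctx: "adjp k u v \<Longrightarrow> pell_string k w \<Longrightarrow> pell_string k w' \<Longrightarrow>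
  adjp k (w @ u @ w') (w @ v @ w')"
  unfolding adjp_def using move_ctx by (auto intro!: pell_append)

lemma walk_ctx: "(adjp k ^^ m) u v \<Longrightarrow> pell_string k w \<Longrightarrow> pell_string k w' \<Longrightarrow>
  (adjp k ^^ m) (w @ u @ w') (w @ v @ w')"
proof (induction m arbitrary: v)
  case 0 then show ?case by simp
next
  case (Suc m)
  from Suc.prems(1) obtain y where "(adjp k ^^ m) u y" "adjp k y v" by (rule relpowp_Suc_E)
  then show ?case using Suc adjp_ctx by (meson relpowp_Suc_I)
qed

lemma walk_pell: "(adjp k ^^ m) u v \<Longrightarrow> pell_string k u \<Longrightarrow> pell_string k v"
proof (induction m arbitrary: v)
  case 0 then show ?case by simp
next
  case (Suc m)
  from Suc.prems(1) obtain y where "(adjp k ^^ m) u y" "adjp k y v" by (rule relpowp_Suc_E)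
  then show ?case unfolding adjp_def by auto
qed

lemma walk_len: "(adjp k ^^ m) u v \<Longrightarrow> length u = length v"
proof (induction m arbitrary: v)
  case 0 then show ?case by simp
next
  case (Suc m)
  from Suc.prems(1) obtain y where "(adjp k ^^ m) u y" "adjp k y v" by (rule relpowp_Suc_E)
  then show ?case using adjp_len Suc by metis
qed

lemma walk_sym: "(adjp k ^^ m) u v \<Longrightarrow> (adjp k ^^ m) v u"
proof (induction m arbitrary: v)
  case 0 then show ?case by simp
next
  case (Suc m)
  from Suc.prems(1) obtain y where "(adjp k ^^ m) u y" "adjp k y v" by (rule relpowp_Suc_E)
  then show ?case using Suc adjp_sym by (meson relpowp_Suc_I2)
qed

lemma walk_concat: "(adjp k ^^ a) u1 v1 \<Longrightarrow> (adjp k ^^ b) u2 v2 \<Longrightarrow>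
  pell_string k u1 \<Longrightarrow> pell_string k u2 \<Longrightarrow> (adjp k ^^ (a + b)) (u1 @ u2) (v1 @ v2)"
proof -
  assume h: "(adjp k ^^ a) u1 v1" "(adjp k ^^ b) u2 v2" "pell_string k u1" "pell_string k u2"
  have v1: "pell_string k v1" using walk_pell h by blast
  have "(adjp k ^^ a) ([] @ u1 @ u2) ([] @ v1 @ u2)"
    by (rule walk_ctx[OF h(1)]) (auto intro: pell_string.intros h)
  moreover have "(adjp k ^^ b) (v1 @ u2 @ []) (v1 @ v2 @ [])"
    by (rule walk_ctx[OF h(2) v1]) (auto intro: pell_string.intros)
  ultimately show ?thesis using relpowp_trans by fastforce
qed

lemma adj_step: "i + 1 < k \<Longrightarrow> adjp k [i] [Suc i]"
  unfolding adjp_def pell_move_def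
  by (auto intro!: pell_single) (metis Suc_eq_plus1 Suc_leI add_2_eq_Suc' append.left_neutral append_Cons append_Nil2 plus_1_eq_Suc)

lemma walk_up: "c \<le> b \<Longrightarrow> b < k \<Longrightarrow> (adjp k ^^ (b - c)) [c] [b]"
proof (induction b)
  case 0 then show ?case by simp
next
  case (Suc b)
  show ?case
  proof (cases "c = Suc b")
    case True then show ?thesis by simp
  next
    case False
    then have "(adjp k ^^ (b - c)) [c] [b]" using Suc by simp
    moreover have "adjp k [b] [Suc b]" using Suc.prems by (intro adj_step) simp
    ultimately have "(adjp k ^^ Suc (b - c)) [c] [Suc b]" by (rule relpowp_Suc_I)
    moreover have "Suc (b - c) = Suc b - c" using False Suc.prems by simp
    ultimately show ?thesis by simp
  qed
qed

lemma walk_single: "c < k \<Longrightarrow> b < k \<Longrightarrow> (adjp k ^^ ((b - c) + (c - b))) [c] [b]"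
proof (cases "c \<le> b")
  case True
  assume "c < k" "b < k"
  then show ?thesis using walk_up[OF True] True by simp
next
  case False
  assume "c < k" "b < k"
  then have "(adjp k ^^ (c - b)) [b] [c]" using walk_up[of b c k] False by simp
  then show ?thesis using walk_sym False by simp
qed

lemma walk_dom: assumes "c < k" shows "(adjp k ^^ (2 * (k - 1 - c) + 1)) [c, c] [k, k]"
proof -
  have p: "pell_string k [c]" "pell_string k [k - 1]" using assms by (auto intro: pell_single)
  have w: "(adjp k ^^ (k - 1 - c)) [c] [k - 1]" using walk_single[of c k "k - 1"] assms by simp
  have "(adjp k ^^ ((k - 1 - c) + (k - 1 - c))) ([c] @ [c]) ([k - 1] @ [k - 1])"
    by (rule walk_concat[OF w w p(1) p(1)])
  moreover have "pell_move k [k - 1, k - 1] [k, k]"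
    unfolding pell_move_def by (intro disjI2 exI[of _ "[]"]) simp
  then have "adjp k [k - 1, k - 1] [k, k]"
    unfolding adjp_def using assms
    by (auto intro!: pell_string.intros)
  ultimately have "(adjp k ^^ Suc ((k - 1 - c) + (k - 1 - c))) [c, c] [k, k]"
    by (auto intro: relpowp_Suc_I)
  then show ?thesis by (simp add: mult_2)
qed

lemma center_walk:
  assumes "pell_string k v" "k \<ge> 2"
  shows "\<exists>m p q. (adjp k ^^ m) (replicate (length v) (k div 2)) v \<and> length v = p + 2 * q
           \<and> m \<le> (k div 2) * p + k * q"
  using assms(1)
proof (induction v rule: pell_string.induct)
  case Nil then show ?case by auto
next
  case (Small i xs)
  then obtain m p q where h: "(adjp k ^^ m) (replicate (length xs) (k div 2)) xs"
    "length xs = p + 2 * q" "m \<le> (k div 2) * p + k * q" by blast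
  have ck: "k div 2 < k" using assms by simp
  have w: "(adjp k ^^ ((i - k div 2) + (k div 2 - i))) [k div 2] [i]"
    using walk_single[OF ck Small.hyps(1)] .
  have "(adjp k ^^ (((i - k div 2) + (k div 2 - i)) + m)) ([k div 2] @ replicate (length xs) (k div 2)) ([i] @ xs)"
    by (rule walk_concat[OF w h(1)]) (auto intro: pell_single pell_rep ck)
  moreover have "(i - k div 2) + (k div 2 - i) \<le> k div 2" using Small.hyps(1) by auto
  ultimately show ?case using h
    by (intro exI[of _ "((i - k div 2) + (k div 2 - i)) + m"] exI[of _ "Suc p"] exI[of _ q]) auto
next
  case (KK xs)
  then obtain m p q where h: "(adjp k ^^ m) (replicate (length xs) (k div 2)) xs"
    "length xs = p + 2 * q" "m \<le> (k div 2) * p + k * q" by blast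
  have ck: "k div 2 < k" using assms by simp
  have "(adjp k ^^ ((2 * (k - 1 - k div 2) + 1) + m)) ([k div 2, k div 2] @ replicate (length xs) (k div 2)) ([k, k] @ xs)"
    by (rule walk_concat[OF walk_dom[OF ck] h(1)]) (auto intro!: pell_string.intros pell_rep ck)
  moreover have "2 * (k - 1 - k div 2) + 1 \<le> k" using assms by linarith
  ultimately show ?case using h
    by (intro exI[of _ "(2 * (k - 1 - k div 2) + 1) + m"] exI[of _ p] exI[of _ "Suc q"])
       (auto simp: numeral_2_eq_2)
qed

lemma center_bound:
  assumes "length v = p + 2 * q" "m \<le> (k div 2) * p + k * q" "n = length v"
  shows "m \<le> (k * n) div 2"
proof (cases "even k")
  case True
  then obtain t where "k = 2 * t" by blast
  then show ?thesis using assms by (simp add: algebra_simps)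
next
  case False
  then obtain t where t: "k = 2 * t + 1" by (metis oddE)
  have "k * n = 2 * (t * p + 2 * t * q + q) + p" using assms t by (simp add: algebra_simps)
  then have "(k * n) div 2 = t * p + 2 * t * q + q + p div 2" by simp
  moreover have "k div 2 = t" using t by simp
  ultimately show ?thesis using assms t by (simp add: algebra_simps)
qed

lemma adjp_to_pell_adj: "(adjp k ^^ m) u v \<Longrightarrow> length u = n \<Longrightarrow> (pell_adj n k ^^ m) u v"
proof (induction m arbitrary: v)
  case 0 then show ?case by simp
next
  case (Suc m)
  from Suc.prems(1) obtain y where y: "(adjp k ^^ m) u y" "adjp k y v" by (rule relpowp_Suc_E)
  have "length y = n" using walk_len[OF y(1)] Suc.prems by simp
  then have "pell_adj n k y v" using y(2) adjp_len[OF y(2)]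
    unfolding pell_adj_def adjp_def pell_vertices_def by auto
  then show ?case using Suc y by (meson relpowp_Suc_I)
qed

fun fv :: "nat \<Rightarrow> nat \<Rightarrow> nat" where
  "fv k x = (if x = k then 2 * k - 1 else 2 * x)"

fun Fd :: "nat \<Rightarrow> nat list \<Rightarrow> nat list \<Rightarrow> nat" where
  "Fd k (x # xs) (y # ys) = (fv k x - fv k y) + (fv k y - fv k x) + Fd k xs ys"
| "Fd k _ _ = 0"

lemma Fd_append: "length a = length c \<Longrightarrow> Fd k (a @ b) (c @ d) = Fd k a c + Fd k b d"
proof (induction a arbitrary: c)
  case Nil then show ?case by simp
next
  case (Cons x xs) then show ?case by (cases c) auto
qed

lemma Fd_refl: "Fd k a a = 0"
  by (induction a) auto

lemma Fd_sym: "Fd k a b = Fd k b a"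
  by (induction k a b rule: Fd.induct) auto

lemma Fd_tri: "length u = length v \<Longrightarrow> length v = length w \<Longrightarrow> Fd k u w \<le> Fd k u v + Fd k v w"
proof (induction u arbitrary: v w)
  case Nil then show ?case by simp
next
  case (Cons x xs)
  then obtain y ys z zs where "v = y # ys" "w = z # zs" by (metis length_Suc_conv)
  moreover have "Fd k xs zs \<le> Fd k xs ys + Fd k ys zs" using Cons calculation by simp
  ultimately show ?case by (simp del: fv.simps)
qed

lemma move_Fd: "pell_move k u v \<Longrightarrow> k \<ge> 2 \<Longrightarrow> Fd k u v \<le> 2"
  unfolding pell_move_def
  by (auto simp: Fd_append Fd_refl)

lemma walk_Fd: "(pell_adj n k ^^ m) u v \<Longrightarrow> length u = n \<Longrightarrow> k \<ge> 2 \<Longrightarrow> Fd k u v \<le> 2 * m"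
proof (induction m arbitrary: v)
  case 0 then show ?case by (simp add: Fd_refl)
next
  case (Suc m)
  from Suc.prems(1) obtain y where y: "(pell_adj n k ^^ m) u y" "pell_adj n k y v" by (rule relpowp_Suc_E)
  have ly: "length y = n" "length v = n" using y(2) unfolding pell_adj_def pell_vertices_def by auto
  have "Fd k y v \<le> 2" using y(2) Suc.prems move_Fd Fd_sym unfolding pell_adj_def by metis
  moreover have "Fd k u v \<le> Fd k u y + Fd k y v" using ly Suc.prems by (intro Fd_tri) auto
  ultimately show ?case using Suc y by fastforce
qed

lemma far:
  assumes "pell_string k u" "k \<ge> 2"
  shows "\<exists>v. pell_string k v \<and> length v = length u \<and> k * length u \<le> Fd k u v + 1"
  using assms(1)
proof (induction "length u" arbitrary: u rule: less_induct)
  case less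
  show ?case
  proof (cases u)
    case Nil then show ?thesis by (auto intro: pell_string.intros)
  next
    case (Cons x r)
    note inv = pell_cons_inv[OF less.prems[unfolded Cons]]
    show ?thesis
    proof (cases "x = k")
      case True
      then obtain r' where r: "r = k # r'" "pell_string k r'" using inv by auto
      obtain v' where v': "pell_string k v'" "length v' = length r'" "k * length r' \<le> Fd k r' v' + 1"
        using less.hyps[of r'] r Cons by auto
      have "pell_string k (0 # 0 # v')" using v' assms by (auto intro!: pell_string.intros)
      moreover have "k * length u \<le> Fd k u (0 # 0 # v') + 1"
        using v' Cons r True assms by (simp add: algebra_simps)
      ultimately show ?thesis using v' Cons r by (intro exI[of _ "0 # 0 # v'"]) auto
    next
      case False
      then have x: "x < k" "pell_string k r" using inv by auto
      show ?thesis
      proof (cases r)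
        case Nil
        show ?thesis
        proof (cases "k \<le> 2 * x + 1")
          case True
          then show ?thesis using Cons Nil x assms
            by (intro exI[of _ "[0]"]) (auto intro: pell_single)
        next
          case False
          then show ?thesis using Cons Nil x assms
            by (intro exI[of _ "[k - 1]"]) (auto intro: pell_single)
        qed
      next
        case (Cons y r2)
        note inv2 = pell_cons_inv[OF x(2)[unfolded Cons]]
        show ?thesis
        proof (cases "y = k")
          case True
          then obtain r' where r: "r2 = k # r'" "pell_string k r'" using inv2 by auto
          obtain v' where v': "pell_string k v'" "length v' = length r'" "k * length r' \<le> Fd k r' v' + 1"
            using less.hyps[of r'] r Cons \<open>u = x # r\<close> by auto
          have "pell_string k (0 # 0 # 0 # v')" using v' assms by (auto intro!: pell_string.intros)
          moreover have "k * length u \<le> Fd k u (0 # 0 # 0 # v') + 1"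
            using v' Cons r True assms x \<open>u = x # r\<close> by (simp add: algebra_simps)
          ultimately show ?thesis using v' Cons r \<open>u = x # r\<close> by (intro exI[of _ "0 # 0 # 0 # v'"]) auto
        next
          case False
          then have y: "y < k" "pell_string k r2" using inv2 by auto
          obtain v' where v': "pell_string k v'" "length v' = length r2" "k * length r2 \<le> Fd k r2 v' + 1"
            using less.hyps[of r2] y Cons \<open>u = x # r\<close> by auto
          show ?thesis
          proof (cases "k \<le> x + y")
            case True
            have "pell_string k (0 # 0 # v')" using v' assms by (auto intro!: pell_string.intros)
            moreover have "k * length u \<le> Fd k u (0 # 0 # v') + 1"
              using v' Cons True assms x y \<open>u = x # r\<close> by (simp add: algebra_simps)
            ultimately show ?thesis using v' Cons \<open>u = x # r\<close> by (intro exI[of _ "0 # 0 # v'"]) auto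
          next
            case False
            have "pell_string k (k # k # v')" using v' assms by (auto intro!: pell_string.intros)
            moreover have "k * length u \<le> Fd k u (k # k # v') + 1"
              using v' Cons False assms x y \<open>u = x # r\<close> by (simp add: algebra_simps)
            ultimately show ?thesis using v' Cons \<open>u = x # r\<close> by (intro exI[of _ "k # k # v'"]) auto
          qed
        qed
      qed
    qed
  qed
qed

theorem proposition4p1:
  fixes n k :: nat
  assumes "n \<ge> 1" and "k \<ge> 2"
  shows "pell_radius n k = (k * n) div 2"
proof -
  define V where "V = pell_vertices n k"
  define z where "z = replicate n (k div 2)"
  define B where "B = (k * n) div 2"
  have finV: "finite V"
  proof (rule finite_subset)
    show "V \<subseteq> {xs. set xs \<subseteq> {..k} \<and> length xs = n}"
      unfolding V_def pell_vertices_def using pell_le by auto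
    show "finite {xs. set xs \<subseteq> {..k} \<and> length xs = n}" by (rule finite_lists_length_eq) simp
  qed
  have zV: "z \<in> V" unfolding z_def V_def pell_vertices_def using assms by (auto intro: pell_rep)
  have cw: "\<exists>m. (adjp k ^^ m) z v \<and> m \<le> B" if "v \<in> V" for v
  proof -
    have v: "pell_string k v" "length v = n" using that unfolding V_def pell_vertices_def by auto
    obtain m p q where "(adjp k ^^ m) (replicate (length v) (k div 2)) v" "length v = p + 2 * q"
      "m \<le> (k div 2) * p + k * q" using center_walk[OF v(1) assms(2)] by blast
    then show ?thesis using center_bound[of v p q m k n] v unfolding z_def B_def by auto
  qed
  have conn: "\<exists>m. (pell_adj n k ^^ m) u v" if uv: "u \<in> V" "v \<in> V" for u v
  proof -
    obtain m1 where m1: "(adjp k ^^ m1) z u" using cw uv by blast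
    obtain m2 where m2: "(adjp k ^^ m2) z v" using cw uv by blast
    have "(adjp k ^^ (m1 + m2)) u v" using relpowp_trans[OF walk_sym[OF m1] m2] .
    then show ?thesis using adjp_to_pell_adj uv unfolding V_def pell_vertices_def by blast
  qed
  have dz: "pell_dist n k z v \<le> B" if vV: "v \<in> V" for v
  proof -
    obtain m where m: "(adjp k ^^ m) z v" "m \<le> B" using cw vV by blast
    have "(pell_adj n k ^^ m) z v" using adjp_to_pell_adj[OF m(1)] unfolding z_def by simp
    then have "pell_dist n k z v \<le> m" unfolding pell_dist_def by (rule Least_le)
    then show ?thesis using m by simp
  qed
  have dl: "Fd k u v \<le> 2 * pell_dist n k u v" if "u \<in> V" "v \<in> V" for u v
  proof -
    have "(pell_adj n k ^^ pell_dist n k u v) u v" unfolding pell_dist_def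
      using conn[OF that] by (rule LeastI_ex)
    then show ?thesis using walk_Fd assms that unfolding V_def pell_vertices_def by blast
  qed
  have ez: "pell_ecc n k z \<le> B"
    unfolding pell_ecc_def V_def[symmetric] using finV zV dz by (subst Max_le_iff) auto
  have eu: "B \<le> pell_ecc n k u" if "u \<in> V" for u
  proof -
    have u: "pell_string k u" "length u = n" using that unfolding V_def pell_vertices_def by auto
    obtain v where v: "pell_string k v" "length v = length u" "k * length u \<le> Fd k u v + 1"
      using far[OF u(1) assms(2)] by blast
    have vV: "v \<in> V" using v u unfolding V_def pell_vertices_def by auto
    have "k * n \<le> 2 * pell_dist n k u v + 1" using dl[OF that vV] v u by simp
    then have "B \<le> pell_dist n k u v" unfolding B_def by linarith
    also have "\<dots> \<le> pell_ecc n k u" unfolding pell_ecc_def V_def[symmetric]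
      using finV vV by (intro Max_ge) auto
    finally show ?thesis .
  qed
  have "pell_radius n k \<le> B"
    unfolding pell_radius_def V_def[symmetric] using finV zV ez
    by (meson Min_le dual_order.trans finite_imageI imageI)
  moreover have "B \<le> pell_radius n k"
    unfolding pell_radius_def V_def[symmetric] using finV zV eu by (subst Min_ge_iff) auto
  ultimately show ?thesis unfolding B_def by simp
qed

end
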